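(* Let $g\ge 3$, $m_g=2g+2$, $h_g=\binom{m_g}{2}$, and let $(k,r)\in\Gamma_\psi$. Then: (i) if $k$ has a marking of weight at least $g+1$, then $r$ is not GIT-semistable; (ii) if $\mathrm{supp}(k)$ is reducible and, for some irreducible component of $\mathrm{supp}(k)$, the set of markings of $k$ lying on smooth points of $\mathrm{supp}(k)$ on that component consists of exactly one marking, of weight $1$, then $r$ is not GIT-semistable; (iii) if $\mathrm{supp}(k)$ is integral and all markings of $k$ have weight $1$, then $r\in V$.
   Context: We work over $\mathbb{C}$. Let $\mathcal C\to\mathbb{P}^5\cong|\mathcal O_{\mathbb{P}^2}(2)|$ be the universal plane conic and, for $m\ge 2$, let $\mathrm{Sym}^m_{\mathbb{P}^5}\mathcal C$ be the quotient of the $m$-fold fibre product $\mathcal C\times_{\mathbb{P}^5}\dots\times_{\mathbb{P}^5}\mathcal C$ by the symmetric group $S_m$, with projection $\rho$ to $\mathbb{P}^5$. For $k\in\mathrm{Sym}^m_{\mathbb{P}^5}\mathcal C$, $\mathrm{supp}(k)$ is the plane conic parametrized by $\rho(k)$; the distinct points of $k$ (a multiset of $m$ points on $\mathrm{supp}(k)$) are its markings, and the weight of a marking is the number of times it appears in $k$. $k$ is called degenerate if $\mathrm{supp}(k)$ is not integral. Let $\mathbb P_{h}=\mathrm{Sym}^{h}(\mathbb{P}^2)^\vee$ be the space of configurations of $h$ plane lines (with multiplicities), with its natural $SL(3)$-action and linearization; $\mathbb P_h^{ss}$ denotes the GIT-semistable points. Fix $g\ge3$, $m_g=2g+2$, $h_g=\binom{m_g}{2}$,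 and define the rational map $\psi\colon\mathrm{Sym}^{m_g}_{\mathbb{P}^5}\mathcal C\dashrightarrow\mathbb P_{h_g}$ as follows: if $k$ has distinct markings $p_1,\dots,p_r$ with weights $m_1,\dots,m_r$, then $\psi(k)$ is the configuration consisting of the line $\overline{p_ip_j}$ (spanned by $p_i,p_j$) with multiplicity $m_im_j$ for each $1\le i<j\le r$, together with the tangent line $\mathbb T_{p_h}\mathrm{supp}(k)$ with multiplicity $\binom{m_h}{2}$ for each $h$ with $m_h>1$. Let $\Gamma_\psi\subset\mathrm{Sym}^{m_g}_{\mathbb{P}^5}\mathcal C\times\mathbb P_{h_g}$ be the closure of the graph of $\psi$ and $p\colon\Gamma_\psi\to\mathbb P_{h_g}$ the second projection. Let $V$ be the set of $r\in p(\Gamma_\psi)\cap\mathbb P_{h_g}^{ss}$ such that there is no degenerate $k$ with $(k,r)\in\Gamma_\psi$. (Hilbert–Mumford criterion: $r\in\mathbb P_{h}$ is GIT-semistable iff $\max_{x\in\mathbb{P}^2}\mu_x(r)\le 2h/3$ and $\max_{l}\mu_l(r)\le h/3$, where $\mu_x(r)$ is the number of lines of $r$ through $x$ counted with multiplicity and $\mu_l(r)$ is the multiplicity of the line $l$ in $r$.) *)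

theory Defs
  imports "HOL-Analysis.Analysis"
begin

(* Points of P^2 and lines of (P^2)^dual are represented by nonzero vectors in complex^3;
   plane conics by nonzero symmetric 3x3 complex matrices (up to scalars).
   All predicates below are invariant under rescaling of representatives and
   reordering of lists. *)

definition bdot :: "complex^3 \<Rightarrow> complex^3 \<Rightarrow> complex" where
  "bdot x y = (\<Sum>i\<in>UNIV. x$i * y$i)"

definition qf :: "complex^3^3 \<Rightarrow> complex^3 \<Rightarrow> complex" where
  "qf A x = bdot x (A *v x)"

definition proj_eq :: "complex^3 \<Rightarrow> complex^3 \<Rightarrow> bool" where
  "proj_eq p q \<longleftrightarrow> (\<exists>c. c \<noteq> 0 \<and> q = c *s p)"

definition pcls :: "complex^3 \<Rightarrow> (complex^3) set" where
  "pcls v = {w. proj_eq v w}"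

(* coordinates of the line spanned by two distinct points *)
definition cross3 :: "complex^3 \<Rightarrow> complex^3 \<Rightarrow> complex^3" where
  "cross3 p q = vector [p$2*q$3 - p$3*q$2, p$3*q$1 - p$1*q$3, p$1*q$2 - p$2*q$1]"

(* k = (A, ps) represents a point of Sym^m_{P^5} C *)
definition valid_k :: "nat \<Rightarrow> complex^3^3 \<Rightarrow> (complex^3) list \<Rightarrow> bool" where
  "valid_k m A ps \<longleftrightarrow> A \<noteq> 0 \<and> transpose A = A \<and> length ps = m \<and>
     (\<forall>p\<in>set ps. p \<noteq> 0 \<and> qf A p = 0)"

(* r = L represents a configuration of h lines *)
definition valid_r :: "nat \<Rightarrow> (complex^3) list \<Rightarrow> bool" where
  "valid_r h L \<longleftrightarrow> length L = h \<and> (\<forall>l\<in>set L. l \<noteq> 0)"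

definition integral_conic :: "complex^3^3 \<Rightarrow> bool" where
  "integral_conic A \<longleftrightarrow> \<not> (\<exists>a b. \<forall>x. qf A x = bdot a x * bdot b x)"

definition line_pair :: "complex^3^3 \<Rightarrow> complex^3 \<Rightarrow> complex^3 \<Rightarrow> bool" where
  "line_pair A a b \<longleftrightarrow> a \<noteq> 0 \<and> b \<noteq> 0 \<and> \<not> proj_eq a b \<and>
     (\<forall>x. qf A x = bdot a x * bdot b x)"

definition reducible_conic :: "complex^3^3 \<Rightarrow> bool" where
  "reducible_conic A \<longleftrightarrow> (\<exists>a b. line_pair A a b)"

definition weight :: "(complex^3) list \<Rightarrow> complex^3 \<Rightarrow> nat" where
  "weight ps p = card {i. i < length ps \<and> proj_eq p (ps!i)}"

definition generic_k :: "complex^3^3 \<Rightarrow> (complex^3) list \<Rightarrow> bool" where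
  "generic_k A ps \<longleftrightarrow> integral_conic A \<and>
     (\<forall>i<length ps. \<forall>j<length ps. i \<noteq> j \<longrightarrow> \<not> proj_eq (ps!i) (ps!j))"

(* L represents psi(k) for generic k: the lines p_i p_j, i<j, each with multiplicity 1 *)
definition psi_rep :: "(complex^3) list \<Rightarrow> (complex^3) list \<Rightarrow> bool" where
  "psi_rep ps L \<longleftrightarrow> mset (map pcls L) =
     mset [pcls (cross3 (ps!i) (ps!j)). i \<leftarrow> [0..<length ps], j \<leftarrow> [Suc i..<length ps]]"

(* (k, r) in the closure of the graph of psi (classical closure = Zariski closure over C) *)
definition Gamma_psi :: "nat \<Rightarrow> complex^3^3 \<Rightarrow> (complex^3) list \<Rightarrow> (complex^3) list \<Rightarrow> bool" where
  "Gamma_psi m A ps L \<longleftrightarrow> valid_k m A ps \<and> valid_r (m choose 2) L \<and>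
     (\<exists>Qs Ps Ls. (\<forall>n. valid_k m (Qs n) (Ps n) \<and> generic_k (Qs n) (Ps n) \<and>
                       valid_r (m choose 2) (Ls n) \<and> psi_rep (Ps n) (Ls n)) \<and>
        Qs \<longlonglongrightarrow> A \<and>
        (\<forall>i<m. (\<lambda>n. Ps n ! i) \<longlonglongrightarrow> ps ! i) \<and>
        (\<forall>j<m choose 2. (\<lambda>n. Ls n ! j) \<longlonglongrightarrow> L ! j))"

definition mu_pt :: "(complex^3) list \<Rightarrow> complex^3 \<Rightarrow> nat" where
  "mu_pt L x = card {j. j < length L \<and> bdot (L!j) x = 0}"

definition mu_line :: "(complex^3) list \<Rightarrow> complex^3 \<Rightarrow> nat" where
  "mu_line L l = card {j. j < length L \<and> proj_eq l (L!j)}"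

(* GIT semistability via the Hilbert-Mumford criterion *)
definition semistable :: "(complex^3) list \<Rightarrow> bool" where
  "semistable L \<longleftrightarrow>
     (\<forall>x. x \<noteq> 0 \<longrightarrow> 3 * mu_pt L x \<le> 2 * length L) \<and>
     (\<forall>l. l \<noteq> 0 \<longrightarrow> 3 * mu_line L l \<le> length L)"

definition in_V :: "nat \<Rightarrow> (complex^3) list \<Rightarrow> bool" where
  "in_V m L \<longleftrightarrow> (\<exists>A ps. Gamma_psi m A ps L) \<and> semistable L \<and>
     \<not> (\<exists>A ps. Gamma_psi m A ps L \<and> \<not> integral_conic A)"

end

theory Submission
  imports Defs "HOL-Combinatorics.Permutations" "HOL-Library.Infinite_Set"
begin


lemma bdot3: "bdot x y = x$1*y$1 + x$2*y$2 + x$3*y$3"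
  by (simp add: bdot_def sum_3)

lemma cross3_c: "cross3 p q $ 1 = p$2*q$3 - p$3*q$2" "cross3 p q $ 2 = p$3*q$1 - p$1*q$3"
   "cross3 p q $ 3 = p$1*q$2 - p$2*q$1"
  by (simp_all add: cross3_def)

lemma vec3_eq: "(x::complex^3) = y \<longleftrightarrow> x$1 = y$1 \<and> x$2 = y$2 \<and> x$3 = y$3"
  by (simp add: vec_eq_iff forall_3)

lemma vec3_zero: "(x::complex^3) = 0 \<longleftrightarrow> x$1 = 0 \<and> x$2 = 0 \<and> x$3 = 0"
  by (simp add: vec_eq_iff forall_3)

lemma bdot_cross_1: "bdot (cross3 u v) u = 0" and bdot_cross_2: "bdot (cross3 u v) v = 0"
  by (simp_all add: bdot3 cross3_c algebra_simps)

lemma bdot_smult_l: "bdot (c *s x) y = c * bdot x y"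
  by (simp add: bdot3 algebra_simps)
lemma bdot_smult_r: "bdot x (c *s y) = c * bdot x y"
  by (simp add: bdot3 algebra_simps)
lemma bdot_comm: "bdot x y = bdot y x"
  by (simp add: bdot3 algebra_simps)
lemma bdot_add_r: "bdot x (y + z) = bdot x y + bdot x z"
  by (simp add: bdot3 algebra_simps)
lemma bdot_diff_r: "bdot x (y - z) = bdot x y - bdot x z"
  by (simp add: bdot3 algebra_simps)

lemma bac_cab: "cross3 l (cross3 u v) = bdot l v *s u - bdot l u *s v"
  by (simp add: vec3_eq cross3_c bdot3 algebra_simps)

lemma cross3_swap: "cross3 u v = - cross3 v u"
  by (simp add: vec3_eq cross3_c algebra_simps)

lemma proj_eq_refl: "proj_eq x x"
  unfolding proj_eq_def by (rule exI[of _ 1]) simp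

lemma proj_eq_sym: "proj_eq x y \<Longrightarrow> proj_eq y x"
  unfolding proj_eq_def by (metis divisors_zero nonzero_eq_divide_eq vector_smult_assoc vector_smult_lid)

lemma proj_eq_trans: "proj_eq x y \<Longrightarrow> proj_eq y z \<Longrightarrow> proj_eq x z"
  unfolding proj_eq_def by (metis mult_eq_0_iff vector_smult_assoc)

lemma proj_eq_cross: "proj_eq u v \<Longrightarrow> cross3 u v = 0"
  unfolding proj_eq_def by (auto simp: vec3_zero cross3_c algebra_simps)

lemma proj_eq_nz: "proj_eq u v \<Longrightarrow> u \<noteq> 0 \<longleftrightarrow> v \<noteq> 0"
  unfolding proj_eq_def by auto

lemma cross_proj_eq:
  assumes "u \<noteq> 0" "v \<noteq> 0" "cross3 u v = 0" shows "proj_eq u v"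
proof -
  have e: "u$2* v$3 = u$3* v$2" "u$3* v$1 = u$1* v$3" "u$1* v$2 = u$2* v$1"
    using assms(3) by (simp_all add: vec3_zero cross3_c)
  have "\<exists>k\<in>{1,2,3::3}. u$k \<noteq> 0" using assms(1) by (auto simp: vec3_zero)
  then obtain k :: 3 where k: "k \<in> {1,2,3}" "u$k \<noteq> 0" by blast
  define c where "c = v$k / u$k"
  have vc: "v = c *s u"
    using k e unfolding c_def
    by (auto simp: vec3_eq field_simps)
  have "c \<noteq> 0" using vc assms(2) by auto
  thus ?thesis unfolding proj_eq_def using vc by blast
qed

lemma proj_eq_iff_cross: "u \<noteq> 0 \<Longrightarrow> v \<noteq> 0 \<Longrightarrow> proj_eq u v \<longleftrightarrow> cross3 u v = 0"
  using cross_proj_eq proj_eq_cross by blast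

lemma proj_eq_bdot: "proj_eq l l' \<Longrightarrow> bdot l x = 0 \<longleftrightarrow> bdot l' x = 0"
  unfolding proj_eq_def by (auto simp: bdot_smult_l)

lemma proj_eq_bdot2: "proj_eq p p' \<Longrightarrow> bdot l p = 0 \<longleftrightarrow> bdot l p' = 0"
  unfolding proj_eq_def by (auto simp: bdot_smult_r)

lemma line_through:
  assumes "l \<noteq> 0" "bdot l u = 0" "bdot l v = 0" "u \<noteq> 0" "v \<noteq> 0" "\<not> proj_eq u v"
  shows "proj_eq l (cross3 u v)"
proof -
  have "cross3 l (cross3 u v) = 0" using assms by (simp add: bac_cab)
  moreover have "cross3 u v \<noteq> 0" using assms proj_eq_iff_cross by blast
  ultimately show ?thesis using assms(1) cross_proj_eq by blast
qed


definition Bf :: "complex^3^3 \<Rightarrow> complex^3 \<Rightarrow> complex^3 \<Rightarrow> complex" where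
  "Bf A x y = bdot x (A *v y)"

lemma Av3: "((A::complex^3^3) *v (x::complex^3)) $ i = A$i$1 * x$1 + A$i$2 * x$2 + A$i$3 * x$3"
  by (simp add: matrix_vector_mult_def sum_3)

lemma sym3: assumes "transpose A = A"
  shows "A$1$2 = A$2$1" "A$1$3 = A$3$1" "A$2$3 = A$3$2"
  using assms by (metis transpose_def vec_lambda_beta)+

lemma qf_smult: "qf A (c *s x) = c^2 * qf A x"
proof -
  have "A *v (c *s x) = c *s (A *v x)" by (simp add: vec_eq_iff matrix_vector_mult_def sum_distrib_left algebra_simps)
  thus ?thesis by (simp add: qf_def bdot_def sum_distrib_left power2_eq_square algebra_simps)
qed

lemma qf_Bf: "qf A x = Bf A x x" by (simp add: qf_def Bf_def)

lemma qf3_expand: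
  assumes "transpose A = A"
  shows "qf A (a *s u + b *s v + c *s w) = a^2 * qf A u + b^2 * qf A v + c^2 * qf A w
     + 2*a*b * Bf A u v + 2*a*c * Bf A u w + 2*b*c * Bf A v w"
  using sym3[OF assms]
  by (simp add: qf_def Bf_def bdot3 Av3 power2_eq_square algebra_simps)

lemma cramer3:
  "bdot (cross3 p1 p2) y *s x = bdot (cross3 p2 y) x *s p1 + bdot (cross3 y p1) x *s p2
     + bdot (cross3 p1 p2) x *s y"
  by (simp add: vec3_eq bdot3 cross3_c algebra_simps)

lemma exists_bdot_nz: assumes "(c::complex^3) \<noteq> 0" shows "\<exists>y. bdot c y \<noteq> 0"
proof -
  have "bdot c (vector [1,0,0]) = c$1" "bdot c (vector [0,1,0]) = c$2" "bdot c (vector [0,0,1]) = c$3"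
    by (simp_all add: bdot3)
  thus ?thesis using assms by (metis vec3_zero)
qed

lemma qf_zero_sym:
  assumes "transpose A = A" "\<forall>x. qf A x = 0" shows "A = 0"
proof -
  have s: "A$1$2 = A$2$1" "A$1$3 = A$3$1" "A$2$3 = A$3$2" using sym3[OF assms(1)] by auto
  have d: "A$1$1 = 0" "A$2$2 = 0" "A$3$3 = 0"
    using assms(2)[rule_format, of "vector [1,0,0]"] assms(2)[rule_format, of "vector [0,1,0]"]
      assms(2)[rule_format, of "vector [0,0,1]"]
    by (simp_all add: qf_def bdot3 Av3)
  have o: "A$1$2 = 0" "A$1$3 = 0" "A$2$3 = 0"
    using assms(2)[rule_format, of "vector [1,1,0]"] assms(2)[rule_format, of "vector [1,0,1]"]
      assms(2)[rule_format, of "vector [0,1,1]"] d s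
    by (simp_all add: qf_def bdot3 Av3)
  show ?thesis using d o s by (simp add: vec_eq_iff forall_3)
qed

lemma three_collinear_not_integral:
  assumes sym: "transpose A = A"
    and q: "qf A p1 = 0" "qf A p2 = 0" "qf A p3 = 0"
    and nz: "p1 \<noteq> 0" "p2 \<noteq> 0" "p3 \<noteq> 0"
    and np: "\<not> proj_eq p1 p2" "\<not> proj_eq p1 p3" "\<not> proj_eq p2 p3"
    and l: "l \<noteq> 0" "bdot l p1 = 0" "bdot l p2 = 0" "bdot l p3 = 0"
  shows "\<not> integral_conic A"
proof -
  define c where "c = cross3 p1 p2"
  have pl: "proj_eq l c" unfolding c_def using line_through[OF l(1,2,3) nz(1,2) np(1)] .
  have c3: "bdot c p3 = 0" using proj_eq_bdot[OF pl] l(4) by simp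
  have cnz: "c \<noteq> 0" using pl l(1) proj_eq_nz by blast
  obtain y where y: "bdot c y \<noteq> 0" using exists_bdot_nz[OF cnz] by blast
  define D where "D = bdot c y"
  define al where "al x = bdot (cross3 p2 y) x" for x
  define be where "be x = bdot (cross3 y p1) x" for x
  have cr: "D *s x = al x *s p1 + be x *s p2 + bdot c x *s y" for x
    unfolding D_def al_def be_def c_def by (rule cramer3)
  have Dnz: "D \<noteq> 0" using y D_def by simp
  have a3: "al p3 \<noteq> 0"
  proof
    assume "al p3 = 0"
    hence "D *s p3 = be p3 *s p2" using cr[of p3] c3 by simp
    hence "p3 = (be p3 / D) *s p2" using Dnz
      by (metis (no_types, lifting) divide_inverse_commute vector_smult_assoc vector_smult_lid
          mult.commute right_inverse)
    moreover hence "be p3 / D \<noteq> 0" using nz(3) by auto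
    ultimately show False using np(3) unfolding proj_eq_def by blast
  qed
  have b3: "be p3 \<noteq> 0"
  proof
    assume "be p3 = 0"
    hence "D *s p3 = al p3 *s p1" using cr[of p3] c3 by simp
    hence "p3 = (al p3 / D) *s p1" using Dnz
      by (metis (no_types, lifting) divide_inverse_commute vector_smult_assoc vector_smult_lid
          mult.commute right_inverse)
    moreover hence "al p3 / D \<noteq> 0" using nz(3) by auto
    ultimately show False using np(2) unfolding proj_eq_def by blast
  qed
  have "qf A (D *s p3) = 0" using q(3) by (simp add: qf_smult)
  hence "2 * al p3 * be p3 * Bf A p1 p2 = 0"
    using cr[of p3] c3 qf3_expand[OF sym, of "al p3" p1 "be p3" p2 0 y] q by simp
  hence B12: "Bf A p1 p2 = 0" using a3 b3 by simp
  define b where "b = (1 / D^2) *s (qf A y *s c + (2 * Bf A p1 y) *s cross3 p2 y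
       + (2 * Bf A p2 y) *s cross3 y p1)"
  have "qf A x = bdot c x * bdot b x" for x
  proof -
    have "D^2 * qf A x = qf A (D *s x)" by (simp add: qf_smult)
    also have "\<dots> = bdot c x * (bdot c x * qf A y + 2 * al x * Bf A p1 y + 2 * be x * Bf A p2 y)"
      unfolding cr qf3_expand[OF sym] using q B12 by (simp add: power2_eq_square algebra_simps)
    finally show ?thesis unfolding b_def al_def be_def using Dnz
      by (simp add: bdot_smult_l bdot_add_r bdot_comm[of _ x] bdot3 field_simps power2_eq_square)
  qed
  thus ?thesis unfolding integral_conic_def by blast
qed


lemma tendsto_bdot: "X \<longlonglongrightarrow> x \<Longrightarrow> Y \<longlonglongrightarrow> y \<Longrightarrow> (\<lambda>n. bdot (X n) (Y n)) \<longlonglongrightarrow> bdot x y"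
  unfolding bdot3 by (intro tendsto_intros)

lemma tendsto_cross3: assumes a: "X \<longlonglongrightarrow> x" "Y \<longlonglongrightarrow> y"
  shows "(\<lambda>n. cross3 (X n) (Y n)) \<longlonglongrightarrow> cross3 x y"
proof (rule vec_tendstoI)
  fix i :: 3
  show "(\<lambda>n. cross3 (X n) (Y n) $ i) \<longlonglongrightarrow> cross3 x y $ i"
  proof -
    have "(\<lambda>n. cross3 (X n) (Y n) $ 1) \<longlonglongrightarrow> cross3 x y $ 1"
      "(\<lambda>n. cross3 (X n) (Y n) $ 2) \<longlonglongrightarrow> cross3 x y $ 2"
      "(\<lambda>n. cross3 (X n) (Y n) $ 3) \<longlonglongrightarrow> cross3 x y $ 3"
      unfolding cross3_c by (intro tendsto_intros a)+
    thus ?thesis using exhaust_3[of i] by auto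
  qed
qed

definition PL :: "nat \<Rightarrow> (nat \<times> nat) list" where
  "PL m = [(i,j). i \<leftarrow> [0..<m], j \<leftarrow> [Suc i..<m]]"

lemma set_PL: "set (PL m) = {(i,j). i < j \<and> j < m}"
  unfolding PL_def by force

lemma distinct_concat_pairs:
  "distinct xs \<Longrightarrow> (\<forall>x. distinct (ys x)) \<Longrightarrow> distinct (concat (map (\<lambda>i. map (Pair i) (ys i)) xs))"
  by (induction xs) (auto simp: distinct_map inj_on_def)

lemma distinct_PL: "distinct (PL m)"
  unfolding PL_def by (simp add: distinct_concat_pairs comp_def)

definition E2 :: "nat \<Rightarrow> nat set set" where
  "E2 m = {e. e \<subseteq> {..<m} \<and> card e = 2}"

lemma card_E2: "card (E2 m) = m choose 2"
  unfolding E2_def using n_subsets[of "{..<m}" 2] by simp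

lemma bij_pairs: "bij_betw (\<lambda>(i,k). {i,k}) (set (PL m)) (E2 m)"
proof -
  have inj: "inj_on (\<lambda>(i,k). {i,k}) (set (PL m))"
    unfolding set_PL inj_on_def by (auto simp: doubleton_eq_iff)
  have "(\<lambda>(i,k). {i,k}) ` set (PL m) = E2 m"
  proof
    show "(\<lambda>(i,k). {i,k}) ` set (PL m) \<subseteq> E2 m" unfolding set_PL E2_def by auto
    show "E2 m \<subseteq> (\<lambda>(i,k). {i,k}) ` set (PL m)"
    proof
      fix e assume "e \<in> E2 m"
      then obtain a b where ab: "e = {a,b}" "a \<noteq> b" "a < m" "b < m"
        unfolding E2_def by (auto simp: card_2_iff)
      show "e \<in> (\<lambda>(i,k). {i,k}) ` set (PL m)"
      proof (cases "a < b")
        case True thus ?thesis using ab unfolding set_PL by (auto intro!: image_eqI[of _ _ "(a,b)"])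
      next
        case False thus ?thesis using ab unfolding set_PL
          by (auto intro!: image_eqI[of _ _ "(b,a)"])
      qed
    qed
  qed
  thus ?thesis using inj by (simp add: bij_betw_def)
qed

lemma length_PL: "length (PL m) = m choose 2"
proof -
  have "length (PL m) = card (set (PL m))" using distinct_PL distinct_card by metis
  also have "\<dots> = card (E2 m)" using bij_pairs bij_betw_same_card by blast
  finally show ?thesis using card_E2 by simp
qed

lemma psi_rep_PL:
  assumes "psi_rep P Ls" "length P = m"
  shows "mset (map pcls Ls) = mset (map (\<lambda>(i,j). pcls (cross3 (P!i) (P!j))) (PL m))"
  using assms unfolding psi_rep_def PL_def by (simp add: map_concat comp_def)

lemma pcls_eq: "pcls u = pcls v \<Longrightarrow> proj_eq u v"
  unfolding pcls_def using proj_eq_refl by blast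

lemma corr:
  assumes G: "Gamma_psi m A ps L"
  shows "\<exists>\<tau>. bij_betw \<tau> {..<m choose 2} (E2 m) \<and>
     (\<forall>j < m choose 2. \<forall>i k. \<tau> j = {i,k} \<longrightarrow> i \<noteq> k \<longrightarrow>
         bdot (L!j) (ps!i) = 0 \<and> cross3 (L!j) (cross3 (ps!i) (ps!k)) = 0)"
proof -
  define h where "h = m choose 2"
  obtain Qs Ps Ls where seq: "\<forall>n. valid_k m (Qs n) (Ps n) \<and> generic_k (Qs n) (Ps n) \<and>
                       valid_r h (Ls n) \<and> psi_rep (Ps n) (Ls n)"
    and limP: "\<forall>i<m. (\<lambda>n. Ps n ! i) \<longlonglongrightarrow> ps ! i"
    and limL: "\<forall>j<h. (\<lambda>n. Ls n ! j) \<longlonglongrightarrow> L ! j"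
    using G unfolding Gamma_psi_def h_def by blast
  define f where "f n = (\<lambda>(i,j). pcls (cross3 (Ps n!i) (Ps n!j)))" for n
  have ex: "\<exists>p. p permutes {..<h} \<and> (\<forall>j<h. pcls (Ls n ! j) = f n (PL m ! p j))" for n
  proof -
    have lenP: "length (Ps n) = m" using seq unfolding valid_k_def by blast
    have lenL: "length (Ls n) = h" using seq unfolding valid_r_def by blast
    have "mset (map pcls (Ls n)) = mset (map (f n) (PL m))"
      using psi_rep_PL[of "Ps n" "Ls n" m] seq lenP unfolding f_def by blast
    then obtain p where p: "p permutes {..<length (map (f n) (PL m))}"
       "permute_list p (map (f n) (PL m)) = map pcls (Ls n)"
      using mset_eq_permutation by metis
    have ph: "p permutes {..<h}" using p(1) by (simp add: length_PL h_def)
    have "\<forall>j<h. pcls (Ls n ! j) = f n (PL m ! p j)"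
    proof (intro allI impI)
      fix j assume j: "j < h"
      have "pcls (Ls n ! j) = map pcls (Ls n) ! j" using j lenL by simp
      also have "\<dots> = permute_list p (map (f n) (PL m)) ! j" using p(2) by simp
      also have "\<dots> = map (f n) (PL m) ! p j" using permute_list_nth[OF p(1)] j
        by (simp add: length_PL h_def)
      also have "\<dots> = f n (PL m ! p j)" using permutes_in_image[OF ph] j
        by (simp add: length_PL h_def)
      finally show "pcls (Ls n ! j) = f n (PL m ! p j)" .
    qed
    thus ?thesis using ph by blast
  qed
  define \<pi> where "\<pi> n = (SOME p. p permutes {..<h} \<and> (\<forall>j<h. pcls (Ls n ! j) = f n (PL m ! p j)))" for n
  have \<pi>: "\<pi> n permutes {..<h} \<and> (\<forall>j<h. pcls (Ls n ! j) = f n (PL m ! \<pi> n j))" for n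
    unfolding \<pi>_def by (rule someI_ex[OF ex])
  have "finite (range \<pi>)"
    by (rule finite_subset[OF _ finite_permutations[of "{..<h}"]]) (use \<pi> in auto)
  then obtain p0 where "infinite (\<pi> -` {p0})" using inf_img_fin_domE[of \<pi> UNIV] by auto
  then obtain r :: "nat \<Rightarrow> nat" where r: "strict_mono r" "\<And>n. \<pi> (r n) = p0"
    using infinite_enumerate by blast
  have p0: "p0 permutes {..<h}" using \<pi>[of "r 0"] r(2) by simp
  define \<tau> where "\<tau> j = (\<lambda>(i,k). {i,k}) (PL m ! p0 j)" for j
  have bij: "bij_betw \<tau> {..<h} (E2 m)"
  proof -
    have "bij_betw ((!) (PL m)) {..<h} (set (PL m))"
      by (rule bij_betw_nth) (simp_all add: distinct_PL length_PL h_def)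
    hence "bij_betw ((!) (PL m) \<circ> p0) {..<h} (set (PL m))"
      using permutes_imp_bij[OF p0] bij_betw_trans by blast
    hence "bij_betw ((\<lambda>(i,k). {i,k}) \<circ> ((!) (PL m) \<circ> p0)) {..<h} (E2 m)"
      using bij_pairs bij_betw_trans by blast
    thus ?thesis unfolding \<tau>_def comp_def by simp
  qed
  have propj: "bdot (L!j) (ps!i) = 0 \<and> bdot (L!j) (ps!k) = 0 \<and> cross3 (L!j) (cross3 (ps!i) (ps!k)) = 0"
    if j: "j < h" and ik: "(i,k) = PL m ! p0 j" for j i k
  proof -
    have "PL m ! p0 j \<in> set (PL m)" using permutes_in_image[OF p0] j
      by (simp add: length_PL h_def)
    hence ikm: "i < k" "k < m" using ik set_PL by auto
    have pe: "proj_eq (Ls (r n) ! j) (cross3 (Ps (r n) ! i) (Ps (r n) ! k))" for n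
      using \<pi>[of "r n"] r(2)[of n] j ik unfolding f_def
      by (metis (no_types, lifting) case_prod_conv pcls_eq)
    have z1: "bdot (Ls (r n) ! j) (Ps (r n) ! i) = 0" for n
      using pe[of n] bdot_cross_1 proj_eq_bdot by blast
    have z1': "bdot (Ls (r n) ! j) (Ps (r n) ! k) = 0" for n
      using pe[of n] bdot_cross_2 proj_eq_bdot by blast
    have z2: "cross3 (Ls (r n) ! j) (cross3 (Ps (r n) ! i) (Ps (r n) ! k)) = 0" for n
      using pe[of n] proj_eq_cross by blast
    have lL: "(\<lambda>n. Ls (r n) ! j) \<longlonglongrightarrow> L ! j"
      using LIMSEQ_subseq_LIMSEQ[OF limL[rule_format, OF j] r(1)] by (simp add: comp_def)
    have lPi: "(\<lambda>n. Ps (r n) ! i) \<longlonglongrightarrow> ps ! i"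
      using LIMSEQ_subseq_LIMSEQ[OF limP[rule_format] r(1), of i] ikm by (simp add: comp_def)
    have lPk: "(\<lambda>n. Ps (r n) ! k) \<longlonglongrightarrow> ps ! k"
      using LIMSEQ_subseq_LIMSEQ[OF limP[rule_format] r(1), of k] ikm by (simp add: comp_def)
    have "(\<lambda>n. bdot (Ls (r n) ! j) (Ps (r n) ! i)) \<longlonglongrightarrow> bdot (L!j) (ps!i)"
      by (rule tendsto_bdot[OF lL lPi])
    hence a: "bdot (L!j) (ps!i) = 0" using z1 by (simp add: LIMSEQ_const_iff)
    have "(\<lambda>n. cross3 (Ls (r n) ! j) (cross3 (Ps (r n) ! i) (Ps (r n) ! k))) \<longlonglongrightarrow>
           cross3 (L!j) (cross3 (ps!i) (ps!k))"
      by (rule tendsto_cross3[OF lL tendsto_cross3[OF lPi lPk]])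
    hence b: "cross3 (L!j) (cross3 (ps!i) (ps!k)) = 0" using z2 by (simp add: LIMSEQ_const_iff)
    have "(\<lambda>n. bdot (Ls (r n) ! j) (Ps (r n) ! k)) \<longlonglongrightarrow> bdot (L!j) (ps!k)"
      by (rule tendsto_bdot[OF lL lPk])
    hence c: "bdot (L!j) (ps!k) = 0" using z1' by (simp add: LIMSEQ_const_iff)
    show ?thesis using a b c by blast
  qed
  have "\<forall>j < h. \<forall>i k. \<tau> j = {i,k} \<longrightarrow> i \<noteq> k \<longrightarrow>
         bdot (L!j) (ps!i) = 0 \<and> cross3 (L!j) (cross3 (ps!i) (ps!k)) = 0"
  proof (intro allI impI)
    fix j i k assume j: "j < h" and e: "\<tau> j = {i,k}" and ne: "i \<noteq> k"
    obtain a b where ab: "PL m ! p0 j = (a,b)" by (cases "PL m ! p0 j")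
    have "{a,b} = {i,k}" using e ab unfolding \<tau>_def by simp
    hence "(a = i \<and> b = k) \<or> (a = k \<and> b = i)" by (auto simp: doubleton_eq_iff)
    thus "bdot (L!j) (ps!i) = 0 \<and> cross3 (L!j) (cross3 (ps!i) (ps!k)) = 0"
    proof
      assume "a = i \<and> b = k" thus ?thesis using propj[OF j, of i k] ab by simp
    next
      assume abk: "a = k \<and> b = i"
      have p: "bdot (L!j) (ps!k) = 0 \<and> bdot (L!j) (ps!i) = 0 \<and> cross3 (L!j) (cross3 (ps!k) (ps!i)) = 0"
        using propj[OF j, of k i] ab abk by simp
      have "bdot (L!j) (ps!i) = 0" using p by blast
      moreover have "cross3 (L!j) (cross3 (ps!i) (ps!k)) = 0"
        using p by (simp add: cross3_swap[of "ps!i"] vec3_eq cross3_c algebra_simps)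
      ultimately show ?thesis by blast
    qed
  qed
  thus ?thesis using bij unfolding h_def by blast
qed


lemma card_E2_sub: "finite D \<Longrightarrow> card {e. e \<subseteq> D \<and> card e = 2} = card D choose 2"
  by (rule n_subsets)

lemma touching_count:
  assumes bij: "bij_betw \<tau> {..<m choose 2} (E2 m)" and C: "C \<subseteq> {..<m}"
  shows "card {j. j < m choose 2 \<and> \<tau> j \<inter> C \<noteq> {}} \<ge> (m choose 2) - ((m - card C) choose 2)"
proof -
  define h where "h = m choose 2"
  define D where "D = {..<m} - C"
  have cD: "card D = m - card C" unfolding D_def using C by (simp add: card_Diff_subset finite_subset)
  define T where "T = {j. j < h \<and> \<tau> j \<inter> C \<noteq> {}}"
  define T' where "T' = {j. j < h \<and> \<tau> j \<inter> C = {}}"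
  have un: "{..<h} = T \<union> T'" unfolding T_def T'_def by auto
  have "h \<le> card T + card T'" using card_Un_le[of T T'] un by (metis card_lessThan)
  moreover have "card T' \<le> card D choose 2"
  proof -
    have "\<tau> ` T' \<subseteq> {e. e \<subseteq> D \<and> card e = 2}"
      using bij unfolding T'_def D_def E2_def bij_betw_def h_def by auto
    moreover have "inj_on \<tau> T'" using inj_on_subset[of \<tau> "{..<h}" T'] bij
      unfolding bij_betw_def T'_def h_def by auto
    moreover have "finite {e. e \<subseteq> D \<and> card e = 2}" unfolding D_def by simp
    ultimately have "card T' \<le> card {e. e \<subseteq> D \<and> card e = 2}"
      using card_image card_mono by metis
    thus ?thesis using card_E2_sub[of D] D_def by simp
  qed
  ultimately show ?thesis unfolding T_def h_def cD by linarith
qed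

lemma weight_card: "length ps = m \<Longrightarrow> weight ps p = card {i. i < m \<and> proj_eq p (ps!i)}"
  unfolding weight_def by simp

lemma cluster_mu:
  assumes G: "Gamma_psi m A ps L" and p: "p \<noteq> 0"
  shows "mu_pt L p \<ge> (m choose 2) - ((m - weight ps p) choose 2)"
proof -
  obtain \<tau> where bij: "bij_betw \<tau> {..<m choose 2} (E2 m)"
    and pr: "\<forall>j < m choose 2. \<forall>i k. \<tau> j = {i,k} \<longrightarrow> i \<noteq> k \<longrightarrow>
         bdot (L!j) (ps!i) = 0 \<and> cross3 (L!j) (cross3 (ps!i) (ps!k)) = 0"
    using corr[OF G] by blast
  have len: "length ps = m" "length L = m choose 2" using G unfolding Gamma_psi_def valid_k_def valid_r_def by auto
  define C where "C = {i. i < m \<and> proj_eq p (ps!i)}"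
  have w: "weight ps p = card C" unfolding C_def using weight_card[OF len(1)] by simp
  have sub: "{j. j < m choose 2 \<and> \<tau> j \<inter> C \<noteq> {}} \<subseteq> {j. j < length L \<and> bdot (L!j) p = 0}"
  proof
    fix j assume "j \<in> {j. j < m choose 2 \<and> \<tau> j \<inter> C \<noteq> {}}"
    then obtain i where j: "j < m choose 2" and i: "i \<in> \<tau> j" "i \<in> C" by auto
    have "\<tau> j \<in> E2 m" using bij j unfolding bij_betw_def by auto
    then obtain a b where ab: "\<tau> j = {a,b}" "a \<noteq> b" unfolding E2_def by (auto simp: card_2_iff)
    then obtain k where "\<tau> j = {i,k}" "i \<noteq> k" using i(1) by (auto simp: doubleton_eq_iff)
    hence "bdot (L!j) (ps!i) = 0" using pr j by blast
    moreover have "proj_eq (ps!i) p" using i(2) C_def proj_eq_sym by auto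
    ultimately have "bdot (L!j) p = 0" using proj_eq_bdot2 by blast
    thus "j \<in> {j. j < length L \<and> bdot (L!j) p = 0}" using j len by simp
  qed
  have "card {j. j < m choose 2 \<and> \<tau> j \<inter> C \<noteq> {}} \<le> mu_pt L p"
    unfolding mu_pt_def by (rule card_mono[OF _ sub]) simp
  moreover have "C \<subseteq> {..<m}" unfolding C_def by auto
  ultimately have "(m choose 2) - ((m - card C) choose 2) \<le> mu_pt L p"
    using touching_count[OF bij \<open>C \<subseteq> {..<m}\<close>] by linarith
  thus ?thesis using w by simp
qed

lemma two_choose: "2 * (n choose 2) = n * (n - 1)"
proof (induction n)
  case 0 thus ?case by simp
next
  case (Suc n)
  have "Suc n choose 2 = n + (n choose 2)" using choose_reduce_nat[of "Suc n" 2]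
    by (simp add: numeral_2_eq_2)
  thus ?case using Suc by (cases n) (simp_all add: algebra_simps)
qed

lemma arith_i: "g \<ge> 3 \<Longrightarrow> 2 * ((2*g+2) choose 2) < 3 * (((2*g+2) choose 2) - ((g+1) choose 2))"
proof -
  assume g: "g \<ge> 3"
  have h: "2 * ((2*g+2) choose 2) = (2*g+2)*(2*g+1)" using two_choose[of "2*g+2"] by simp
  have x: "2 * ((g+1) choose 2) = (g+1)*g" using two_choose[of "g+1"] by simp
  have "(g+1)*g*3 < (2*g+2)*(2*g+1)" by (simp add: algebra_simps)
  thus ?thesis using h x by linarith
qed

lemma part_i:
  assumes g: "g \<ge> 3" and G: "Gamma_psi (2*g+2) A ps L"
    and p: "p \<in> set ps" and w: "weight ps p \<ge> g + 1"
  shows "\<not> semistable L"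
proof -
  have len: "length L = (2*g+2) choose 2" using G unfolding Gamma_psi_def valid_r_def by auto
  have "p \<noteq> 0" using G p unfolding Gamma_psi_def valid_k_def by auto
  have "mu_pt L p \<ge> ((2*g+2) choose 2) - ((2*g+2 - weight ps p) choose 2)"
    using cluster_mu[OF G \<open>p \<noteq> 0\<close>] .
  moreover have "(2*g+2 - weight ps p) choose 2 \<le> (g+1) choose 2"
    by (rule binomial_right_mono) (use w in linarith)
  ultimately have "mu_pt L p \<ge> ((2*g+2) choose 2) - ((g+1) choose 2)" by linarith
  hence "3 * mu_pt L p > 2 * length L" using arith_i[OF g] len by linarith
  thus ?thesis unfolding semistable_def using \<open>p \<noteq> 0\<close> by force
qed


lemma chords:
  assumes G: "Gamma_psi m A ps L"
  shows "\<exists>\<tau>. bij_betw \<tau> {..<m choose 2} (E2 m) \<and>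
     (\<forall>j < m choose 2. \<forall>i\<in>\<tau> j. bdot (L!j) (ps!i) = 0) \<and>
     (\<forall>j < m choose 2. \<forall>i k. \<tau> j = {i,k} \<longrightarrow> i \<noteq> k \<longrightarrow> \<not> proj_eq (ps!i) (ps!k) \<longrightarrow>
         proj_eq (L!j) (cross3 (ps!i) (ps!k))) \<and>
     (\<forall>j < m choose 2. card (\<tau> j) = 2 \<and> \<tau> j \<subseteq> {..<m})"
proof -
  obtain \<tau> where bij: "bij_betw \<tau> {..<m choose 2} (E2 m)"
    and pr: "\<forall>j < m choose 2. \<forall>i k. \<tau> j = {i,k} \<longrightarrow> i \<noteq> k \<longrightarrow>
         bdot (L!j) (ps!i) = 0 \<and> cross3 (L!j) (cross3 (ps!i) (ps!k)) = 0"
    using corr[OF G] by blast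
  have vk: "valid_k m A ps" and vr: "valid_r (m choose 2) L" using G unfolding Gamma_psi_def by auto
  have E: "card (\<tau> j) = 2 \<and> \<tau> j \<subseteq> {..<m}" if "j < m choose 2" for j
    using bij that unfolding bij_betw_def E2_def by auto
  have F1: "\<forall>j < m choose 2. \<forall>i\<in>\<tau> j. bdot (L!j) (ps!i) = 0"
  proof (intro allI impI ballI)
    fix j i assume j: "j < m choose 2" and i: "i \<in> \<tau> j"
    obtain a b where "\<tau> j = {a,b}" "a \<noteq> b" using E[OF j] by (auto simp: card_2_iff)
    then obtain k where "\<tau> j = {i,k}" "i \<noteq> k" using i by (auto simp: doubleton_eq_iff)
    thus "bdot (L!j) (ps!i) = 0" using pr j by blast
  qed
  have F2: "\<forall>j < m choose 2. \<forall>i k. \<tau> j = {i,k} \<longrightarrow> i \<noteq> k \<longrightarrow> \<not> proj_eq (ps!i) (ps!k) \<longrightarrow>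
         proj_eq (L!j) (cross3 (ps!i) (ps!k))"
  proof (intro allI impI)
    fix j i k assume j: "j < m choose 2" and e: "\<tau> j = {i,k}" and ne: "i \<noteq> k"
      and np: "\<not> proj_eq (ps!i) (ps!k)"
    have "i < m" "k < m" using E[OF j] e by auto
    hence nz: "ps!i \<noteq> 0" "ps!k \<noteq> 0" using vk unfolding valid_k_def by auto
    have Lnz: "L!j \<noteq> 0" using vr j unfolding valid_r_def by auto
    have c0: "cross3 (L!j) (cross3 (ps!i) (ps!k)) = 0" using pr j e ne by blast
    have "cross3 (ps!i) (ps!k) \<noteq> 0" using nz np proj_eq_iff_cross by blast
    thus "proj_eq (L!j) (cross3 (ps!i) (ps!k))" using cross_proj_eq Lnz c0 by blast
  qed
  show ?thesis using bij F1 F2 E by blast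
qed

lemma distinct_marks:
  assumes len: "length ps = m" and w: "\<forall>p\<in>set ps. weight ps p = 1"
    and ik: "i < m" "k < m" "proj_eq (ps!i) (ps!k)"
  shows "i = k"
proof -
  have "weight ps (ps!i) = 1" using w ik len by auto
  hence c: "card {k. k < m \<and> proj_eq (ps!i) (ps!k)} = 1" using weight_card[OF len] by simp
  have "i \<in> {k. k < m \<and> proj_eq (ps!i) (ps!k)}" "k \<in> {k. k < m \<and> proj_eq (ps!i) (ps!k)}"
    using ik proj_eq_refl by auto
  thus ?thesis using c card_le_Suc0_iff_eq[of "{k. k < m \<and> proj_eq (ps!i) (ps!k)}"] by auto
qed

lemma three_elems:
  assumes "finite S" "card S \<ge> 3"
  obtains a b c where "a \<in> S" "b \<in> S" "c \<in> S" "a \<noteq> b" "a \<noteq> c" "b \<noteq> c"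
proof -
  obtain T where "T \<subseteq> S" "card T = 3" using obtain_subset_with_card_n assms(2) by metis
  thus ?thesis using that card_3_iff[of T] by auto
qed

context
  fixes m A ps L
  assumes G: "Gamma_psi m A ps L" and I: "integral_conic A"
    and W: "\<forall>p\<in>set ps. weight ps p = 1"
begin

lemma vk: "valid_k m A ps" and vr: "valid_r (m choose 2) L" using G unfolding Gamma_psi_def by auto
lemma len: "length ps = m" "length L = m choose 2" using vk vr unfolding valid_k_def valid_r_def by auto
lemma dm: "i < m \<Longrightarrow> k < m \<Longrightarrow> i \<noteq> k \<Longrightarrow> \<not> proj_eq (ps!i) (ps!k)"
  using distinct_marks[OF len(1) W] by blast
lemma nzq: "i < m \<Longrightarrow> ps!i \<noteq> 0 \<and> qf A (ps!i) = 0" using vk len unfolding valid_k_def by auto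
lemma symA: "transpose A = A" using vk unfolding valid_k_def by auto

lemma no_three:
  assumes "l \<noteq> 0" "a < m" "b < m" "c < m" "a \<noteq> b" "a \<noteq> c" "b \<noteq> c"
    "bdot l (ps!a) = 0" "bdot l (ps!b) = 0" "bdot l (ps!c) = 0"
  shows False
  using three_collinear_not_integral[OF symA, of "ps!a" "ps!b" "ps!c" l] nzq dm assms I by blast

lemma mu_line_le1:
  assumes l: "l \<noteq> 0" shows "mu_line L l \<le> 1"
proof -
  obtain \<tau> where bij: "bij_betw \<tau> {..<m choose 2} (E2 m)"
    and F1: "\<forall>j < m choose 2. \<forall>i\<in>\<tau> j. bdot (L!j) (ps!i) = 0"
    and E: "\<forall>j < m choose 2. card (\<tau> j) = 2 \<and> \<tau> j \<subseteq> {..<m}"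
    using chords[OF G] by blast
  define J where "J = {j. j < length L \<and> proj_eq l (L!j)}"
  have "\<forall>j1\<in>J. \<forall>j2\<in>J. j1 = j2"
  proof (intro ballI, rule ccontr)
    fix j1 j2 assume j: "j1 \<in> J" "j2 \<in> J" "j1 \<noteq> j2"
    have jh: "j1 < m choose 2" "j2 < m choose 2" using j len unfolding J_def by auto
    have ne: "\<tau> j1 \<noteq> \<tau> j2" using bij jh j(3) unfolding bij_betw_def inj_on_def by auto
    obtain a b where ab: "\<tau> j1 = {a,b}" "a \<noteq> b" using E jh by (auto simp: card_2_iff)
    have "\<not> \<tau> j2 \<subseteq> \<tau> j1"
      using card_subset_eq[of "\<tau> j1" "\<tau> j2"] E jh ne ab by auto
    then obtain c where c: "c \<in> \<tau> j2" "c \<notin> \<tau> j1" by auto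
    have kill: "bdot l (ps!i) = 0" if "i \<in> \<tau> jj" "jj \<in> J" for i jj
    proof -
      have "jj < m choose 2" using that len unfolding J_def by auto
      hence "bdot (L!jj) (ps!i) = 0" using F1 that by blast
      thus ?thesis using proj_eq_bdot that unfolding J_def by blast
    qed
    have lt: "a < m" "b < m" "c < m" using E jh ab c by auto
    show False using no_three[OF l lt] ab c kill[of a j1] kill[of b j1] kill[of c j2] j by auto
  qed
  hence "card J \<le> Suc 0" using card_le_Suc0_iff_eq[of J] unfolding J_def by simp
  thus ?thesis unfolding mu_line_def J_def by simp
qed

lemma mu_pt_bound:
  assumes x: "x \<noteq> 0" shows "2 * mu_pt L x \<le> 3 * m"
proof -
  obtain \<tau> where bij: "bij_betw \<tau> {..<m choose 2} (E2 m)"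
    and F1: "\<forall>j < m choose 2. \<forall>i\<in>\<tau> j. bdot (L!j) (ps!i) = 0"
    and E: "\<forall>j < m choose 2. card (\<tau> j) = 2 \<and> \<tau> j \<subseteq> {..<m}"
    using chords[OF G] by blast
  have inj: "inj_on \<tau> {..<m choose 2}" using bij unfolding bij_betw_def by auto
  define I0 where "I0 = {i. i < m \<and> proj_eq x (ps!i)}"
  obtain i0 where I0: "I0 \<subseteq> {i0}"
  proof (cases "I0 = {}")
    case True thus ?thesis using that by blast
  next
    case False
    then obtain i0 where "i0 \<in> I0" by blast
    have "I0 \<subseteq> {i0}"
    proof
      fix i assume "i \<in> I0"
      hence "proj_eq (ps!i0) (ps!i)" "i < m" "i0 < m" using \<open>i0 \<in> I0\<close> unfolding I0_def
        using proj_eq_sym proj_eq_trans by blast+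
      thus "i \<in> {i0}" using dm by blast
    qed
    thus ?thesis using that by blast
  qed
  define J where "J = {j. j < length L \<and> bdot (L!j) x = 0}"
  define J1 where "J1 = {j \<in> J. \<tau> j \<inter> I0 \<noteq> {}}"
  define J2 where "J2 = {j \<in> J. \<tau> j \<inter> I0 = {}}"
  have fin: "finite J1" "finite J2" unfolding J1_def J2_def J_def by auto
  have "J = J1 \<union> J2" unfolding J1_def J2_def by auto
  hence "card J \<le> card J1 + card J2" using card_Un_le[of J1 J2] by simp
  moreover have "card J1 \<le> m"
  proof -
    have "\<tau> ` J1 \<subseteq> (\<lambda>k. {i0,k}) ` {..<m}"
    proof
      fix e assume "e \<in> \<tau> ` J1"
      then obtain j where j: "j \<in> J1" "e = \<tau> j" by blast
      have jh: "j < m choose 2" using j len unfolding J1_def J_def by auto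
      have "i0 \<in> e" using j I0 unfolding J1_def by auto
      moreover obtain a b where "e = {a,b}" "a \<noteq> b" using E jh j by (auto simp: card_2_iff)
      moreover have "e \<subseteq> {..<m}" using E jh j by auto
      ultimately show "e \<in> (\<lambda>k. {i0,k}) ` {..<m}" by (auto simp: insert_commute)
    qed
    hence "card (\<tau> ` J1) \<le> card ((\<lambda>k. {i0,k}) ` {..<m})" by (intro card_mono) auto
    also have "\<dots> \<le> card {..<m}" by (rule card_image_le) simp
    finally have "card (\<tau> ` J1) \<le> m" by simp
    moreover have "inj_on \<tau> J1" by (rule inj_on_subset[OF inj]) (use len in \<open>auto simp: J1_def J_def\<close>)
    ultimately show ?thesis by (simp add: card_image)
  qed
  moreover have "2 * card J2 \<le> m"
  proof -
    define F where "F = \<tau> ` J2"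
    have injJ2: "inj_on \<tau> J2" by (rule inj_on_subset[OF inj]) (use len in \<open>auto simp: J2_def J_def\<close>)
    have jh: "j < m choose 2" if "j \<in> J2" for j using that len unfolding J2_def J_def by auto
    have disj: "pairwise disjnt F"
    proof (rule pairwiseI)
      fix e1 e2 assume e: "e1 \<in> F" "e2 \<in> F" "e1 \<noteq> e2"
      then obtain j1 j2 where j: "j1 \<in> J2" "j2 \<in> J2" "e1 = \<tau> j1" "e2 = \<tau> j2" unfolding F_def by blast
      show "disjnt e1 e2"
      proof (rule ccontr)
        assume "\<not> disjnt e1 e2"
        then obtain i where i: "i \<in> e1" "i \<in> e2" unfolding disjnt_def by blast
        obtain a1 b1 where ab1: "e1 = {a1,b1}" "a1 \<noteq> b1" using E jh[OF j(1)] j by (auto simp: card_2_iff)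
        obtain k1 where k1: "e1 = {i,k1}" "i \<noteq> k1" using ab1 i by (auto simp: doubleton_eq_iff)
        obtain a2 b2 where ab2: "e2 = {a2,b2}" "a2 \<noteq> b2" using E jh[OF j(2)] j by (auto simp: card_2_iff)
        obtain k2 where k2: "e2 = {i,k2}" "i \<noteq> k2" using ab2 i by (auto simp: doubleton_eq_iff)
        have k12: "k1 \<noteq> k2" using k1 k2 e(3) by auto
        have s1: "\<tau> j1 \<subseteq> {..<m}" "\<tau> j2 \<subseteq> {..<m}" using E jh j(1,2) by auto
        have lt: "i < m" "k1 < m" "k2 < m" using s1 j k1 k2 by auto
        have iI0: "i \<notin> I0" using j i unfolding J2_def by auto
        hence npx: "\<not> proj_eq (ps!i) x" using lt proj_eq_sym unfolding I0_def by blast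
        define l where "l = cross3 (ps!i) x"
        have onl: "bdot l (ps!k) = 0" if "jj \<in> J2" "\<tau> jj = {i,k}" for jj k
        proof -
          have jjh: "jj < m choose 2" using jh that by blast
          have Lnz: "L!jj \<noteq> 0" using vr jjh unfolding valid_r_def by auto
          have z: "bdot (L!jj) (ps!i) = 0" "bdot (L!jj) (ps!k) = 0" "bdot (L!jj) x = 0"
            using F1 jjh that unfolding J2_def J_def by auto
          have "proj_eq (L!jj) l" unfolding l_def
            by (rule line_through[OF Lnz z(1) z(3) _ x npx]) (use nzq lt in blast)
          thus ?thesis using z(2) proj_eq_bdot by blast
        qed
        have lnz: "l \<noteq> 0" unfolding l_def using nzq lt x npx proj_eq_iff_cross by blast
        show False
          using no_three[OF lnz lt k1(2) k2(2) k12] bdot_cross_1[of "ps!i" x] onl[of j1 k1] onl[of j2 k2]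
            j k1 k2 unfolding l_def by auto
      qed
    qed
    have "\<Union>F \<subseteq> {..<m}" using E jh unfolding F_def by auto
    hence "card (\<Union>F) \<le> m" by (metis card_lessThan card_mono finite_lessThan)
    moreover have "card (\<Union>F) = sum card F"
      by (rule card_Union_disjoint[OF disj]) (use E jh in \<open>auto simp: F_def intro: finite_subset\<close>)
    moreover have "sum card F = 2 * card F"
    proof -
      have "sum card F = sum (\<lambda>_. 2) F" by (rule sum.cong) (use E jh in \<open>auto simp: F_def\<close>)
      thus ?thesis by simp
    qed
    moreover have "card F = card J2" unfolding F_def using injJ2 by (simp add: card_image)
    ultimately show ?thesis by linarith
  qed
  ultimately have "2 * card J \<le> 3 * m" by linarith
  thus ?thesis unfolding mu_pt_def J_def .
qed

end



lemma arith_iii: "g \<ge> 3 \<Longrightarrow> 6*g+6 < 2 * (((2*g+2) choose 2) - ((2*g) choose 2))"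
proof -
  assume g: "g \<ge> 3"
  then obtain k where k: "g = Suc k" by (cases g) auto
  have a: "2 * ((2*g+2) choose 2) = (2*g+2)*(2*g+1)" using two_choose[of "2*g+2"] by simp
  have b: "2 * ((2*g) choose 2) = (2*g)*(2*k+1)" using two_choose[of "2*g"] k by simp
  have "(2*g)*(2*k+1) + 8*g + 2 = (2*g+2)*(2*g+1)" using k by (simp add: algebra_simps)
  thus ?thesis using a b g by linarith
qed

lemma arith_iii2: "g \<ge> 3 \<Longrightarrow> 9 * g + 9 \<le> 2 * ((2*g+2) choose 2)"
proof -
  assume g: "g \<ge> 3"
  have a: "2 * ((2*g+2) choose 2) = (2*g+2)*(2*g+1)" using two_choose[of "2*g+2"] by simp
  have e: "(2*g+2)*(2*g+1) = 4*(g*g) + 6*g + 2" by (simp add: algebra_simps)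
  have ae: "2 * ((2*g+2) choose 2) = 4*(g*g) + 6*g + 2" using a e by simp
  have gg: "3*g \<le> g*g" using mult_le_mono1[OF g] .
  define Y where "Y = g*g"
  obtain Y where Y: "Y = g*g" by blast
  have ae': "2 * ((2*g+2) choose 2) = 4*Y + 6*g + 2" and gg': "3*g \<le> Y" using ae gg Y by auto
  have "9 * g + 9 \<le> 4*Y + 6*g + 2" using gg' g by (simp add: algebra_simps)
  thus ?thesis using ae' by simp
qed

lemma line_two:
  assumes G': "Gamma_psi m A' ps' L" and dm': "\<And>i k. i < m \<Longrightarrow> k < m \<Longrightarrow> i \<noteq> k \<Longrightarrow> \<not> proj_eq (ps'!i) (ps'!k)"
    and l: "l \<noteq> 0" and abc: "a < m" "b < m" "c < m" "a \<noteq> b" "a \<noteq> c" "b \<noteq> c"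
    and on: "bdot l (ps'!a) = 0" "bdot l (ps'!b) = 0" "bdot l (ps'!c) = 0"
  shows "mu_line L l \<ge> 2"
proof -
  obtain \<tau> where bij: "bij_betw \<tau> {..<m choose 2} (E2 m)"
    and F2: "\<forall>j < m choose 2. \<forall>i k. \<tau> j = {i,k} \<longrightarrow> i \<noteq> k \<longrightarrow> \<not> proj_eq (ps'!i) (ps'!k) \<longrightarrow>
         proj_eq (L!j) (cross3 (ps'!i) (ps'!k))"
    using chords[OF G'] by blast
  have vk': "valid_k m A' ps'" and vr': "valid_r (m choose 2) L" using G' unfolding Gamma_psi_def by auto
  have nz: "i < m \<Longrightarrow> ps'!i \<noteq> 0" for i using vk' unfolding valid_k_def by auto
  have lenL: "length L = m choose 2" using vr' unfolding valid_r_def by auto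
  have get: "\<exists>j < m choose 2. proj_eq l (L!j) \<and> \<tau> j = {x,y}"
    if "x < m" "y < m" "x \<noteq> y" "bdot l (ps'!x) = 0" "bdot l (ps'!y) = 0" for x y
  proof -
    have "{x,y} \<in> E2 m" unfolding E2_def using that by auto
    hence "{x,y} \<in> \<tau> ` {..<m choose 2}" using bij unfolding bij_betw_def by simp
    then obtain j where j: "j < m choose 2" "\<tau> j = {x,y}" by (metis imageE lessThan_iff)
    have np: "\<not> proj_eq (ps'!x) (ps'!y)" using dm' that(1,2,3) .
    have "proj_eq (L!j) (cross3 (ps'!x) (ps'!y))" using F2 j np that(3) by simp
    moreover have "proj_eq l (cross3 (ps'!x) (ps'!y))"
      using line_through[OF l that(4,5) nz[OF that(1)] nz[OF that(2)] np] .
    ultimately have "proj_eq l (L!j)" using proj_eq_sym proj_eq_trans by blast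
    thus ?thesis using j by blast
  qed
  obtain j1 where j1: "j1 < m choose 2" "proj_eq l (L!j1)" "\<tau> j1 = {a,b}" using get[of a b] abc on by blast
  obtain j2 where j2: "j2 < m choose 2" "proj_eq l (L!j2)" "\<tau> j2 = {a,c}" using get[of a c] abc on by blast
  have "j1 \<noteq> j2" using j1 j2 abc by (auto simp: doubleton_eq_iff)
  hence "card {j1,j2} = 2" by simp
  moreover have "{j1,j2} \<subseteq> {j. j < length L \<and> proj_eq l (L!j)}" using j1 j2 lenL by auto
  moreover have "finite {j. j < length L \<and> proj_eq l (L!j)}" by simp
  ultimately show ?thesis unfolding mu_line_def using card_mono by metis
qed

lemma part_iii:
  assumes g: "g \<ge> 3" and G: "Gamma_psi (2*g+2) A ps L" and I: "integral_conic A"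
    and W: "\<forall>p\<in>set ps. weight ps p = 1"
  shows "in_V (2*g+2) L"
proof -
  define m where "m = 2*g+2"
  have G0: "Gamma_psi m A ps L" using G m_def by simp
  have lenL: "length L = m choose 2" using len[OF G0 I W] by simp
  have ss: "semistable L"
    unfolding semistable_def
  proof (intro conjI allI impI)
    fix x :: "complex^3" assume "x \<noteq> 0"
    hence "2 * mu_pt L x \<le> 3 * m" using mu_pt_bound[OF G0 I W] by blast
    hence "mu_pt L x \<le> 3*g+3" unfolding m_def by (simp add: algebra_simps)
    thus "3 * mu_pt L x \<le> 2 * length L" using arith_iii2[OF g] lenL unfolding m_def by linarith
  next
    fix l :: "complex^3" assume "l \<noteq> 0"
    hence "mu_line L l \<le> 1" using mu_line_le1[OF G0 I W] by blast
    moreover have "3 \<le> length L" using lenL arith_iii2[OF g] unfolding m_def by linarith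
    ultimately show "3 * mu_line L l \<le> length L" by linarith
  qed
  have nd: False if G': "Gamma_psi m A' ps' L" and NI: "\<not> integral_conic A'" for A' ps'
  proof -
    have vk': "valid_k m A' ps'" using G' unfolding Gamma_psi_def by auto
    have len': "length ps' = m" using vk' unfolding valid_k_def by auto
    have W': "\<forall>p\<in>set ps'. weight ps' p = 1"
    proof
      fix p assume p: "p \<in> set ps'"
      have pnz: "p \<noteq> 0" using vk' p unfolding valid_k_def by auto
      obtain i where i: "i < m" "ps'!i = p" using p len' by (metis in_set_conv_nth)
      have "weight ps' p \<ge> 1"
      proof -
        have "i \<in> {k. k < m \<and> proj_eq p (ps'!k)}" using i proj_eq_refl by auto
        hence "card {k. k < m \<and> proj_eq p (ps'!k)} > 0" by (subst card_gt_0_iff) auto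
        thus ?thesis using weight_card[OF len'] by simp
      qed
      moreover have "\<not> weight ps' p \<ge> 2"
      proof
        assume w2: "weight ps' p \<ge> 2"
        have "mu_pt L p \<ge> (m choose 2) - ((m - weight ps' p) choose 2)" using cluster_mu[OF G' pnz] .
        moreover have "(m - weight ps' p) choose 2 \<le> (2*g) choose 2"
          by (rule binomial_right_mono) (use w2 m_def in linarith)
        ultimately have "mu_pt L p \<ge> (m choose 2) - ((2*g) choose 2)" by linarith
        moreover have "2 * mu_pt L p \<le> 6*g+6" using mu_pt_bound[OF G0 I W pnz] unfolding m_def by simp
        ultimately show False using arith_iii[OF g] unfolding m_def by linarith
      qed
      ultimately show "weight ps' p = 1" by linarith
    qed
    have dm': "\<And>i k. i < m \<Longrightarrow> k < m \<Longrightarrow> i \<noteq> k \<Longrightarrow> \<not> proj_eq (ps'!i) (ps'!k)"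
      using distinct_marks[OF len' W'] by blast
    obtain a b where ab: "\<forall>x. qf A' x = bdot a x * bdot b x" using NI unfolding integral_conic_def by blast
    have symA': "transpose A' = A'" "A' \<noteq> 0" using vk' unfolding valid_k_def by auto
    have anz: "a \<noteq> 0"
    proof
      assume "a = 0"
      hence "\<forall>x. qf A' x = 0" using ab by (simp add: bdot3)
      thus False using qf_zero_sym[OF symA'(1)] symA'(2) by blast
    qed
    have bnz: "b \<noteq> 0"
    proof
      assume "b = 0"
      hence "\<forall>x. qf A' x = 0" using ab by (simp add: bdot3)
      thus False using qf_zero_sym[OF symA'(1)] symA'(2) by blast
    qed
    define Sa where "Sa = {i. i < m \<and> bdot a (ps'!i) = 0}"
    define Sb where "Sb = {i. i < m \<and> bdot b (ps'!i) = 0}"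
    have "{..<m} = Sa \<union> Sb"
    proof
      show "{..<m} \<subseteq> Sa \<union> Sb"
      proof
        fix i assume "i \<in> {..<m}"
        hence "qf A' (ps'!i) = 0" using vk' len' unfolding valid_k_def by auto
        thus "i \<in> Sa \<union> Sb" using ab \<open>i \<in> {..<m}\<close> unfolding Sa_def Sb_def by auto
      qed
    qed (auto simp: Sa_def Sb_def)
    hence "card {..<m} \<le> card Sa + card Sb" using card_Un_le[of Sa Sb] by simp
    hence "m \<le> card Sa + card Sb" by simp
    hence "card Sa \<ge> 3 \<or> card Sb \<ge> 3" unfolding m_def using g by linarith
    moreover have ml: "mu_line L l \<le> 1" if "l \<noteq> 0" for l using mu_line_le1[OF G0 I W that] .
    moreover have key: "False" if S: "card S \<ge> 3" "S = {i. i < m \<and> bdot l (ps'!i) = 0}" "l \<noteq> 0" for S l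
    proof -
      obtain x y z where xyz: "x \<in> S" "y \<in> S" "z \<in> S" "x \<noteq> y" "x \<noteq> z" "y \<noteq> z"
        using three_elems[of S] S by auto
      have "mu_line L l \<ge> 2" using line_two[OF G' dm' S(3), of x y z] xyz S(2) by auto
      thus False using ml[OF S(3)] by linarith
    qed
    ultimately show False using key[OF _ Sa_def anz] key[OF _ Sb_def bnz] by blast
  qed
  show ?thesis unfolding in_V_def m_def[symmetric] using G0 ss nd by blast
qed


lemma amgm: "4 * ((r::nat) * s) \<le> (r + s) * (r + s)"
proof -
  have "0 \<le> (int r - int s)^2" by simp
  hence "int (4 * (r * s)) \<le> int ((r + s) * (r + s))" by (simp add: power2_eq_square algebra_simps)
  thus ?thesis by linarith
qed

lemma arith_ii:
  assumes g: "g \<ge> 3" and U: "2 * U \<le> r * (w + 1)" and rw: "r + (w + 1) = 2*g+2"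
    and T: "T + U \<ge> ((2*g+2) choose 2)"
  shows "2 * ((2*g+2) choose 2) < 3 * T"
proof -
  have h: "2 * ((2*g+2) choose 2) = (2*g+2)*(2*g+1)" using two_choose[of "2*g+2"] by simp
  have "4 * (r * (w+1)) \<le> (2*g+2)*(2*g+2)" using amgm[of r "w+1"] rw by simp
  hence a: "r * (w+1) \<le> (g+1)*(g+1)" by (simp add: algebra_simps)
  obtain X where X: "X = (g+1)*(g+1)" by blast
  obtain Y where Y: "Y = g*g" by blast
  have gg: "3*g \<le> Y" using mult_le_mono1[OF g] Y by simp
  have XY: "X = Y + 2*g + 1" using X Y by (simp add: algebra_simps)
  have hX: "2 * ((2*g+2) choose 2) + 2*g + 2 = 4 * X" using h X by (simp add: algebra_simps)
  have "2 * U \<le> X" using U a X by linarith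
  moreover obtain H where H: "H = ((2*g+2) choose 2)" by blast
  moreover have "2 * H + 2*g + 2 = 4 * X" "H \<le> T + U" using hX T H by simp_all
  ultimately have "2 * H < 3 * T" using XY gg g by linarith
  thus ?thesis using H by simp
qed

lemma part_ii:
  assumes g: "g \<ge> 3" and G: "Gamma_psi (2*g+2) A ps L"
    and lp: "line_pair A a b"
    and j0: "j0 < length ps" "bdot a (ps!j0) = 0" "bdot b (ps!j0) \<noteq> 0" "weight ps (ps!j0) = 1"
    and oth: "\<forall>i<length ps. bdot a (ps!i) = 0 \<and> bdot b (ps!i) \<noteq> 0 \<longrightarrow> proj_eq (ps!j0) (ps!i)"
  shows "\<not> semistable L"
proof -
  define m where "m = 2*g+2"
  define h where "h = m choose 2"
  have G0: "Gamma_psi m A ps L" using G m_def by simp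
  have vk: "valid_k m A ps" and vr: "valid_r h L" using G0 unfolding Gamma_psi_def h_def by auto
  have len: "length ps = m" "length L = h" using vk vr unfolding valid_k_def valid_r_def by auto
  have nzq: "ps!i \<noteq> 0 \<and> qf A (ps!i) = 0" if "i < m" for i using vk len that unfolding valid_k_def by auto
  have bnz: "b \<noteq> 0" and fac: "\<forall>x. qf A x = bdot a x * bdot b x" using lp unfolding line_pair_def by auto
  obtain \<tau> where bij: "bij_betw \<tau> {..<h} (E2 m)"
    and F1: "\<forall>j < h. \<forall>i\<in>\<tau> j. bdot (L!j) (ps!i) = 0"
    and F2: "\<forall>j < h. \<forall>i k. \<tau> j = {i,k} \<longrightarrow> i \<noteq> k \<longrightarrow> \<not> proj_eq (ps!i) (ps!k) \<longrightarrow>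
         proj_eq (L!j) (cross3 (ps!i) (ps!k))"
    and E: "\<forall>j < h. card (\<tau> j) = 2 \<and> \<tau> j \<subseteq> {..<m}"
    using chords[OF G0] unfolding h_def by blast
  have inj: "inj_on \<tau> {..<h}" using bij unfolding bij_betw_def by auto
  have pair: "\<exists>k. \<tau> j = {i,k} \<and> i \<noteq> k \<and> k < m" if "j < h" "i \<in> \<tau> j" for j i
  proof -
    have Ej: "card (\<tau> j) = 2" "\<tau> j \<subseteq> {..<m}" using E that(1) by auto
    obtain x y where "\<tau> j = {x,y}" "x \<noteq> y" using Ej(1) by (auto simp: card_2_iff)
    thus ?thesis using that Ej(2) by (auto simp: doubleton_eq_iff)
  qed
  define wt where "wt i = card {k. k < m \<and> proj_eq (ps!i) (ps!k)}" for i
  have q1: "{k. k < m \<and> proj_eq (ps!j0) (ps!k)} = {j0}"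
  proof -
    have c: "card {k. k < m \<and> proj_eq (ps!j0) (ps!k)} = 1" using j0(4) weight_card[OF len(1)] by simp
    have "j0 \<in> {k. k < m \<and> proj_eq (ps!j0) (ps!k)}" using j0(1) len proj_eq_refl by auto
    thus ?thesis using c by (metis card_1_singletonE singletonD)
  qed
  define B where "B = {..<m} - {j0}"
  have Bprop: "bdot b (ps!i) = 0 \<and> \<not> proj_eq (ps!j0) (ps!i)" if "i \<in> B" for i
  proof -
    have i: "i < m" "i \<noteq> j0" using that B_def by auto
    have np: "\<not> proj_eq (ps!j0) (ps!i)" using q1 i by auto
    have "bdot a (ps!i) * bdot b (ps!i) = 0" using nzq[OF i(1)] fac by simp
    hence "bdot b (ps!i) = 0" using oth np i len by auto
    thus ?thesis using np by blast
  qed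
  have finB: "finite B" "B \<noteq> {}" unfolding B_def m_def using j0 len by (auto simp: m_def)
  have cB: "card B = 2*g+1" unfolding B_def m_def using j0(1) len(1) m_def by simp
  define w where "w = Max (wt ` B)"
  have "Max (wt ` B) \<in> wt ` B" by (rule Max_in) (use finB in auto)
  then obtain ist where ist: "ist \<in> B" "wt ist = w" unfolding w_def by auto
  have wmax: "wt i \<le> w" if "i \<in> B" for i using Max_ge[of "wt ` B"] finB that unfolding w_def by auto
  define y where "y = ps!ist"
  have ism: "ist < m" using ist B_def by auto
  have ynz: "y \<noteq> 0" using nzq[OF ism] y_def by simp
  have yb: "bdot b y = 0" using Bprop[OF ist(1)] y_def by simp
  define C where "C = {k. k < m \<and> proj_eq y (ps!k)}"
  have cC: "card C = w" using ist(2) unfolding wt_def C_def y_def by simp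
  have CB: "C \<subseteq> B"
  proof
    fix k assume k: "k \<in> C"
    have "k \<noteq> j0"
    proof
      assume "k = j0"
      hence "proj_eq (ps!j0) y" using k C_def proj_eq_sym by auto
      thus False using Bprop[OF ist(1)] y_def by simp
    qed
    thus "k \<in> B" using k C_def B_def by auto
  qed
  define R where "R = B - C"
  have cR: "card R + w = 2*g+1" using CB cB cC finB unfolding R_def
    by (metis card_Diff_subset finite_subset le_add_diff_inverse2 card_mono)
  have finR: "finite R" unfolding R_def using finB by simp
  define T where "T = {j. j < h \<and> bdot (L!j) y = 0}"
  define U where "U = {j. j < h \<and> bdot (L!j) y \<noteq> 0}"
  have "{..<h} = T \<union> U" unfolding T_def U_def by auto
  hence TU: "h \<le> card T + card U" using card_Un_le[of T U] by (metis card_lessThan)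
  define U1 where "U1 = {j. j < h \<and> j0 \<in> \<tau> j \<and> \<tau> j \<inter> C = {}}"
  define U2 where "U2 = {j. j < h \<and> \<tau> j \<subseteq> R \<and> (\<exists>i k. \<tau> j = {i,k} \<and> i \<noteq> k \<and> proj_eq (ps!i) (ps!k))}"
  have UU: "U \<subseteq> U1 \<union> U2"
  proof
    fix j assume "j \<in> U"
    hence j: "j < h" "bdot (L!j) y \<noteq> 0" unfolding U_def by auto
    have nC: "\<tau> j \<inter> C = {}"
    proof (rule ccontr)
      assume "\<tau> j \<inter> C \<noteq> {}"
      then obtain i where i: "i \<in> \<tau> j" "i \<in> C" by auto
      have "bdot (L!j) (ps!i) = 0" using F1 j i by blast
      moreover have "proj_eq (ps!i) y" using i(2) C_def proj_eq_sym by auto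
      ultimately show False using proj_eq_bdot2 j(2) by blast
    qed
    show "j \<in> U1 \<union> U2"
    proof (cases "j0 \<in> \<tau> j")
      case True thus ?thesis using j nC unfolding U1_def by auto
    next
      case False
      obtain x z where xz: "\<tau> j = {x,z}" "x \<noteq> z" using E j(1) by (auto simp: card_2_iff)
      have xzm: "x < m" "z < m" using E j(1) xz by auto
      have xzB: "x \<in> B" "z \<in> B" using False xz xzm B_def by auto
      have xzR: "\<tau> j \<subseteq> R" using xz xzB nC unfolding R_def by auto
      have "proj_eq (ps!x) (ps!z)"
      proof (rule ccontr)
        assume np: "\<not> proj_eq (ps!x) (ps!z)"
        have "proj_eq (L!j) (cross3 (ps!x) (ps!z))" using F2 j(1) xz np by blast
        moreover have "proj_eq b (cross3 (ps!x) (ps!z))"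
          using line_through[OF bnz _ _ _ _ np] Bprop xzB nzq xzm by blast
        ultimately have "proj_eq b (L!j)" using proj_eq_sym proj_eq_trans by blast
        hence "bdot (L!j) y = 0" using yb proj_eq_bdot by blast
        thus False using j(2) by simp
      qed
      thus ?thesis using j xz xzR unfolding U2_def by blast
    qed
  qed
  have finU: "finite U1" "finite U2" unfolding U1_def U2_def by auto
  have cU1: "card U1 \<le> card R"
  proof -
    have "\<tau> ` U1 \<subseteq> (\<lambda>k. {j0,k}) ` R"
    proof
      fix e assume "e \<in> \<tau> ` U1"
      then obtain j where j: "j \<in> U1" "e = \<tau> j" by blast
      obtain k where k: "\<tau> j = {j0,k}" "j0 \<noteq> k" "k < m" using pair[of j j0] j unfolding U1_def by auto
      have "k \<notin> C" using j k unfolding U1_def by auto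
      hence "k \<in> R" using k unfolding R_def B_def by auto
      thus "e \<in> (\<lambda>k. {j0,k}) ` R" using j k by auto
    qed
    hence "card (\<tau> ` U1) \<le> card ((\<lambda>k. {j0,k}) ` R)" by (intro card_mono) (auto simp: finR)
    also have "\<dots> \<le> card R" by (rule card_image_le[OF finR])
    finally have c1: "card (\<tau> ` U1) \<le> card R" .
    have "inj_on \<tau> U1" by (rule inj_on_subset[OF inj]) (auto simp: U1_def)
    hence "card (\<tau> ` U1) = card U1" by (rule card_image)
    thus ?thesis using c1 by simp
  qed
  have cU2: "2 * card U2 \<le> card R * (w - 1)"
  proof -
    define F where "F = \<tau> ` U2"
    have "inj_on \<tau> U2" by (rule inj_on_subset[OF inj]) (auto simp: U2_def)
    hence cF: "card F = card U2" unfolding F_def by (rule card_image)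
    have Fp: "e \<subseteq> R \<and> card e = 2 \<and> (\<exists>i k. e = {i,k} \<and> i \<noteq> k \<and> proj_eq (ps!i) (ps!k))" if "e \<in> F" for e
      using that E unfolding F_def U2_def by auto
    have finF: "finite F" unfolding F_def using finU by simp
    have "2 * card F = (\<Sum>e\<in>F. card e)" using Fp by simp
    also have "\<dots> = (\<Sum>e\<in>F. \<Sum>i\<in>R. if i \<in> e then 1 else 0)"
    proof (rule sum.cong[OF refl])
      fix e assume e: "e \<in> F"
      have "(\<Sum>i\<in>R. if i \<in> e then 1 else 0) = (\<Sum>i\<in>{i\<in>R. i \<in> e}. (1::nat))"
        using sum.inter_filter[OF finR, of "\<lambda>_. 1::nat" "\<lambda>i. i \<in> e"] by simp
      also have "{i\<in>R. i \<in> e} = e" using Fp[OF e] by auto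
      finally show "card e = (\<Sum>i\<in>R. if i \<in> e then 1 else 0)" by simp
    qed
    also have "\<dots> = (\<Sum>i\<in>R. \<Sum>e\<in>F. if i \<in> e then 1 else 0)" by (rule sum.swap)
    also have "\<dots> = (\<Sum>i\<in>R. card {e\<in>F. i \<in> e})"
      using sum.inter_filter[OF finF, of "\<lambda>_. 1::nat"] by simp
    also have "\<dots> \<le> (\<Sum>i\<in>R. w - 1)"
    proof (rule sum_mono)
      fix i assume iR: "i \<in> R"
      have im: "i < m" "i \<in> B" using iR R_def B_def by auto
      define K where "K = {k. k < m \<and> proj_eq (ps!i) (ps!k)}"
      have "{e\<in>F. i \<in> e} \<subseteq> (\<lambda>k. {i,k}) ` (K - {i})"
      proof
        fix e assume "e \<in> {e\<in>F. i \<in> e}"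
        hence e: "e \<in> F" "i \<in> e" by auto
        obtain x z where xz: "e = {x,z}" "x \<noteq> z" "proj_eq (ps!x) (ps!z)" using Fp[OF e(1)] by blast
        have "e \<subseteq> {..<m}" using Fp[OF e(1)] R_def B_def by auto
        hence xzm: "x < m" "z < m" using xz by auto
        show "e \<in> (\<lambda>k. {i,k}) ` (K - {i})"
        proof (cases "i = x")
          case True thus ?thesis using xz xzm unfolding K_def by auto
        next
          case False
          hence "i = z" using e(2) xz by auto
          thus ?thesis using xz xzm proj_eq_sym unfolding K_def by (auto simp: insert_commute)
        qed
      qed
      hence "card {e\<in>F. i \<in> e} \<le> card ((\<lambda>k. {i,k}) ` (K - {i}))"
        by (intro card_mono) (auto simp: K_def)
      also have "\<dots> \<le> card (K - {i})" by (rule card_image_le) (simp add: K_def)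
      also have "\<dots> = wt i - 1" unfolding K_def wt_def using im proj_eq_refl by (simp add: card_Diff_singleton)
      also have "\<dots> \<le> w - 1" using wmax[OF im(2)] by simp
      finally show "card {e\<in>F. i \<in> e} \<le> w - 1" .
    qed
    also have "\<dots> = card R * (w - 1)" by simp
    finally show ?thesis using cF by simp
  qed
  have "card U \<le> card (U1 \<union> U2)" using card_mono[OF _ UU] finU by simp
  hence "card U \<le> card U1 + card U2" using card_Un_le[of U1 U2] by linarith
  hence "2 * card U \<le> card R * (w + 1)"
  proof -
    assume cu: "card U \<le> card U1 + card U2"
    have w1: "w \<ge> 1"
    proof -
      have "ist \<in> C" using ism proj_eq_refl unfolding C_def y_def by auto
      hence "card C > 0" using card_gt_0_iff C_def by fastforce
      thus ?thesis using cC by simp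
    qed
    obtain w' where w': "w = Suc w'" using w1 by (cases w) auto
    have "card R * (w + 1) = 2 * card R + card R * (w - 1)" unfolding w' by (simp add: algebra_simps)
    thus ?thesis using cu cU1 cU2 by linarith
  qed
  have "2 * h < 3 * card T"
    using arith_ii[OF g \<open>2 * card U \<le> card R * (w + 1)\<close>, of "card T"] cR TU unfolding h_def m_def by simp
  moreover have "mu_pt L y = card T" unfolding mu_pt_def T_def using len by simp
  ultimately have "3 * mu_pt L y > 2 * length L" using len by simp
  thus ?thesis unfolding semistable_def using ynz by force
qed


theorem lemma3p1:
  fixes g :: nat and A :: "complex^3^3" and ps L :: "(complex^3) list"
  assumes "g \<ge> 3"
    and "Gamma_psi (2*g+2) A ps L"
  shows "((\<exists>p\<in>set ps. weight ps p \<ge> g + 1) \<longrightarrow> \<not> semistable L)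
       \<and> ((reducible_conic A \<and>
           (\<exists>a b. line_pair A a b \<and>
              (\<exists>j<length ps. bdot a (ps!j) = 0 \<and> bdot b (ps!j) \<noteq> 0 \<and> weight ps (ps!j) = 1 \<and>
                 (\<forall>i<length ps. bdot a (ps!i) = 0 \<and> bdot b (ps!i) \<noteq> 0
                      \<longrightarrow> proj_eq (ps!j) (ps!i)))))
          \<longrightarrow> \<not> semistable L)
       \<and> ((integral_conic A \<and> (\<forall>p\<in>set ps. weight ps p = 1)) \<longrightarrow> in_V (2*g+2) L)"
proof (intro conjI impI)
  assume "\<exists>p\<in>set ps. weight ps p \<ge> g + 1"
  then obtain p where "p \<in> set ps" "weight ps p \<ge> g + 1" by blast
  thus "\<not> semistable L" using part_i[OF assms] by blast
next
  assume "reducible_conic A \<and>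
           (\<exists>a b. line_pair A a b \<and>
              (\<exists>j<length ps. bdot a (ps!j) = 0 \<and> bdot b (ps!j) \<noteq> 0 \<and> weight ps (ps!j) = 1 \<and>
                 (\<forall>i<length ps. bdot a (ps!i) = 0 \<and> bdot b (ps!i) \<noteq> 0
                      \<longrightarrow> proj_eq (ps!j) (ps!i))))"
  then obtain a b j where "line_pair A a b" "j < length ps" "bdot a (ps!j) = 0" "bdot b (ps!j) \<noteq> 0"
    "weight ps (ps!j) = 1"
    "\<forall>i<length ps. bdot a (ps!i) = 0 \<and> bdot b (ps!i) \<noteq> 0 \<longrightarrow> proj_eq (ps!j) (ps!i)" by blast
  thus "\<not> semistable L" using part_ii[OF assms] by blast
next
  assume "integral_conic A \<and> (\<forall>p\<in>set ps. weight ps p = 1)"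
  thus "in_V (2*g+2) L" using part_iii[OF assms] by blast
qed

end
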